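(* Let $(L,\preceq,\bot,\top)$ be a bounded lattice with at least three elements. If $L$ has independent blocks, then $L$ can be decomposed into independent blocks.
   Context: For $k\in L$ let ${\uparrow}k=\{x\in L\mid k\preceq x\}$ and ${\downarrow}k=\{x\in L\mid x\preceq k\}$. A block of $L$ is a sublattice $K\subsetneq L$ (a proper subset) such that $K\setminus\{\bot,\top\}\neq\varnothing$ and $({\uparrow}k\cup{\downarrow}k)\setminus\{\bot,\top\}\subseteq K$ for every $k\in K\setminus\{\bot,\top\}$. Two blocks $K_1,K_2$ are independent if $K_1\cap K_2\subseteq\{\bot,\top\}$; a family of blocks is a family of independent blocks if its members are pairwise independent. $L$ is decomposed into independent blocks if there is a family of independent blocks $\{K_i\}_{i\in I}$ of $L$ with $\bigcup_{i\in I}K_i=L$. *)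

theory Defs
  imports Main
begin

text \<open>The bounded lattice L is the whole carrier (UNIV) of a type of class bounded_lattice,
  with order \<le>, bottom bot and top top.\<close>

definition up_set :: "'a::bounded_lattice \<Rightarrow> 'a set" where
  "up_set k = {x. k \<le> x}"

definition down_set :: "'a::bounded_lattice \<Rightarrow> 'a set" where
  "down_set k = {x. x \<le> k}"

definition sublattice :: "'a::bounded_lattice set \<Rightarrow> bool" where
  "sublattice K \<longleftrightarrow> (\<forall>x\<in>K. \<forall>y\<in>K. inf x y \<in> K \<and> sup x y \<in> K)"

definition is_block :: "'a::bounded_lattice set \<Rightarrow> bool" where
  "is_block K \<longleftrightarrow> sublattice K \<and> K \<subset> UNIV \<and> K - {bot, top} \<noteq> {} \<and>
     (\<forall>k \<in> K - {bot, top}. (up_set k \<union> down_set k) - {bot, top} \<subseteq> K)"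

definition independent :: "'a::bounded_lattice set \<Rightarrow> 'a set \<Rightarrow> bool" where
  "independent K1 K2 \<longleftrightarrow> K1 \<inter> K2 \<subseteq> {bot, top}"

definition family_of_independent_blocks :: "'a::bounded_lattice set set \<Rightarrow> bool" where
  "family_of_independent_blocks F \<longleftrightarrow> (\<forall>K\<in>F. is_block K) \<and>
     (\<forall>K1\<in>F. \<forall>K2\<in>F. K1 \<noteq> K2 \<longrightarrow> independent K1 K2)"

definition has_independent_blocks :: "'a::bounded_lattice itself \<Rightarrow> bool" where
  "has_independent_blocks _ \<longleftrightarrow>
     (\<exists>K1 K2 :: 'a set. is_block K1 \<and> is_block K2 \<and> independent K1 K2)"

definition decomposed_into_independent_blocks :: "'a::bounded_lattice itself \<Rightarrow> bool" where
  "decomposed_into_independent_blocks _ \<longleftrightarrow>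
     (\<exists>F :: 'a set set. family_of_independent_blocks F \<and> \<Union>F = UNIV)"

end

theory Submission
  imports Defs
begin

definition crel :: "('a::bounded_lattice \<times> 'a) set" where
  "crel = {(a,b). a \<notin> {bot,top} \<and> b \<notin> {bot,top} \<and> (a \<le> b \<or> b \<le> a)}"

definition comp_of :: "'a::bounded_lattice \<Rightarrow> 'a set" where
  "comp_of x = {y. y \<notin> {bot,top} \<and> (x,y) \<in> crel\<^sup>*}"

definition blk :: "'a::bounded_lattice \<Rightarrow> 'a set" where
  "blk x = comp_of x \<union> {bot,top}"

lemma sym_crel: "sym crel"
  unfolding crel_def sym_def by auto

lemma crel_star_sym: "(a,b) \<in> crel\<^sup>* \<Longrightarrow> (b,a) \<in> crel\<^sup>*"
  by (metis sym_crel sym_rtrancl symD)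

lemma block_closed:
  assumes "is_block K" "a \<in> K - {bot,top}" "(a,b) \<in> crel\<^sup>*"
  shows "b \<in> K - {bot,top} \<or> b = a"
  using assms(3)
proof (induction rule: rtrancl_induct)
  case base then show ?case by simp
next
  case (step y z)
  have y: "y \<in> K - {bot,top}" using step assms(2) by auto
  have "z \<notin> {bot,top}" "y \<le> z \<or> z \<le> y" using step(2) unfolding crel_def by auto
  then have "z \<in> K" using assms(1) y unfolding is_block_def up_set_def down_set_def by blast
  then show ?case using \<open>z \<notin> {bot,top}\<close> by auto
qed

lemma blk_sublattice: "sublattice (blk x)"
  unfolding sublattice_def
proof (intro ballI conjI)
  fix a b assume a: "a \<in> blk x" and b: "b \<in> blk x"
  show "inf a b \<in> blk x"
  proof (cases "inf a b \<in> {bot,top}")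
    case True then show ?thesis unfolding blk_def by auto
  next
    case False
    show ?thesis
    proof (cases "a \<in> {bot,top}")
      case True
      then show ?thesis using b False by auto
    next
      case na: False
    then have "a \<in> comp_of x" using a unfolding blk_def by auto
    moreover have "(a, inf a b) \<in> crel" using False na unfolding crel_def by auto
    ultimately show ?thesis unfolding blk_def comp_of_def using False by auto
    qed
  qed
  show "sup a b \<in> blk x"
  proof (cases "sup a b \<in> {bot,top}")
    case True then show ?thesis unfolding blk_def by auto
  next
    case False
    show ?thesis
    proof (cases "a \<in> {bot,top}")
      case True
      then show ?thesis using b False by auto
    next
      case na: False
    then have "a \<in> comp_of x" using a unfolding blk_def by auto
    moreover have "(a, sup a b) \<in> crel" using False na unfolding crel_def by auto
    ultimately show ?thesis unfolding blk_def comp_of_def using False by auto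
    qed
  qed
qed

theorem corollary23:
  assumes "\<exists>a b c :: 'a::bounded_lattice. a \<noteq> b \<and> a \<noteq> c \<and> b \<noteq> c"
    and "has_independent_blocks TYPE('a)"
  shows "decomposed_into_independent_blocks TYPE('a)"
proof -
  obtain K1 K2 :: "'a set" where B1: "is_block K1" and B2: "is_block K2" and I: "independent K1 K2"
    using assms(2) unfolding has_independent_blocks_def by blast
  obtain k1 where k1: "k1 \<in> K1 - {bot,top}" using B1 unfolding is_block_def by blast
  obtain k2 where k2: "k2 \<in> K2 - {bot,top}" using B2 unfolding is_block_def by blast
  have nr: "(k1,k2) \<notin> crel\<^sup>*"
  proof
    assume "(k1,k2) \<in> crel\<^sup>*"
    from block_closed[OF B1 k1 this] have "k2 \<in> K1" using k1 by auto
    then show False using k2 I unfolding independent_def by auto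
  qed
  define F :: "'a set set" where "F = blk ` (UNIV - {bot,top})"
  have fam: "family_of_independent_blocks F"
    unfolding family_of_independent_blocks_def
  proof (intro conjI ballI impI)
    fix K assume "K \<in> F"
    then obtain x where x: "x \<notin> {bot,top}" and K: "K = blk x" unfolding F_def by auto
    have "sublattice K" using K blk_sublattice by simp
    moreover have "K \<noteq> UNIV"
    proof
      assume "K = UNIV"
      then have "k1 \<in> comp_of x" "k2 \<in> comp_of x" using k1 k2 K unfolding blk_def by auto
      then have "(x,k1) \<in> crel\<^sup>*" "(x,k2) \<in> crel\<^sup>*" unfolding comp_of_def by auto
      then have "(k1,k2) \<in> crel\<^sup>*" using crel_star_sym[of x k1] rtrancl_trans[of k1 x crel k2] by blast
      then show False using nr by simp
    qed
    moreover have "x \<in> K - {bot,top}" using x K unfolding blk_def comp_of_def by auto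
    moreover have "\<forall>k \<in> K - {bot, top}. (up_set k \<union> down_set k) - {bot, top} \<subseteq> K"
    proof (intro ballI subsetI)
      fix k y assume k: "k \<in> K - {bot,top}" and y: "y \<in> (up_set k \<union> down_set k) - {bot, top}"
      have "(x,k) \<in> crel\<^sup>*" using k K unfolding blk_def comp_of_def by auto
      moreover have "(k,y) \<in> crel" using k y unfolding crel_def up_set_def down_set_def by auto
      ultimately have "(x,y) \<in> crel\<^sup>*" by simp
      then show "y \<in> K" using y K unfolding blk_def comp_of_def by auto
    qed
    ultimately show "is_block K" unfolding is_block_def by blast
  next
    fix A B assume A: "A \<in> F" and B: "B \<in> F" and ne: "A \<noteq> B"
    obtain x where x: "A = blk x" using A unfolding F_def by auto
    obtain y where y: "B = blk y" using B unfolding F_def by auto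
    show "independent A B" unfolding independent_def
    proof
      fix z assume z: "z \<in> A \<inter> B"
      show "z \<in> {bot,top}"
      proof (rule ccontr)
        assume "z \<notin> {bot,top}"
        then have "(x,z) \<in> crel\<^sup>*" "(y,z) \<in> crel\<^sup>*" using z x y unfolding blk_def comp_of_def by auto
        then have xy: "(x,y) \<in> crel\<^sup>*" "(y,x) \<in> crel\<^sup>*"
          using crel_star_sym[of y z] crel_star_sym[of x z] rtrancl_trans[of x z crel y] rtrancl_trans[of y z crel x] by blast+
        have "comp_of x = comp_of y" unfolding comp_of_def
          using rtrancl_trans[OF xy(1)] rtrancl_trans[OF xy(2)] by auto
        then show False using ne x y unfolding blk_def by simp
      qed
    qed
  qed
  have "\<Union>F = UNIV"
  proof (intro set_eqI iffI)
    fix z :: 'a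
    show "z \<in> \<Union>F"
    proof (cases "z \<in> {bot,top}")
      case True
      have "blk k1 \<in> F" using k1 unfolding F_def by auto
      then show ?thesis using True unfolding blk_def by blast
    next
      case False
      have "blk z \<in> F" using False unfolding F_def by auto
      moreover have "z \<in> blk z" using False unfolding blk_def comp_of_def by auto
      ultimately show ?thesis by blast
    qed
  qed simp
  then show ?thesis using fam unfolding decomposed_into_independent_blocks_def by blast
qed

end
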